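(* Let $p>2$ be prime, $\mathcal{C}$ a $\mathbb{Z}_p\mathbb{Z}_{p^2}$-additive code and $C=\Phi(\mathcal{C})$. If $\mathbf{x}_1,\ldots,\mathbf{x}_n\in\mathcal{C}$ satisfy $\Phi(\mathbf{x}_1)+\Phi(\mathbf{x}_2)+\cdots+\Phi(\mathbf{x}_n)\in K(C)$, then $\Phi(\mathbf{x}_1+\mathbf{x}_2+\cdots+\mathbf{x}_n)\in K(C)$.
   Context: A $\mathbb{Z}_p\mathbb{Z}_{p^2}$-additive code is a subgroup $\mathcal{C}$ of $\mathbb{Z}_p^\alpha\times\mathbb{Z}_{p^2}^\beta$. The Gray map $\phi:\mathbb{Z}_{p^2}\to\mathbb{Z}_p^p$ is $\phi(\theta)=\theta''(1,\ldots,1)+\theta'(0,1,\ldots,p-1)$ with $\theta=\theta''p+\theta'$, $\theta',\theta''\in\{0,\ldots,p-1\}$, and $\Phi(\mathbf{x},\mathbf{y})=(\mathbf{x},\phi(y_1),\ldots,\phi(y_\beta))$. For $C\subseteq\mathbb{Z}_p^n$, $K(C)=\{\mathbf{x}\in\mathbb{Z}_p^n\mid C+\mathbf{x}=C\}$. *)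

theory Defs
  imports Main "HOL-Computational_Algebra.Primes"
begin

(* Vectors over Z_m of length n: functions nat => int with entries in {0..m-1}
   at indices < n and 0 elsewhere. *)
definition vec_space :: "int \<Rightarrow> nat \<Rightarrow> (nat \<Rightarrow> int) set" where
  "vec_space m n = {v. \<forall>j. (j < n \<longrightarrow> 0 \<le> v j \<and> v j < m) \<and> (n \<le> j \<longrightarrow> v j = 0)}"

definition vadd :: "int \<Rightarrow> (nat \<Rightarrow> int) \<Rightarrow> (nat \<Rightarrow> int) \<Rightarrow> (nat \<Rightarrow> int)" where
  "vadd m u v = (\<lambda>j. (u j + v j) mod m)"

definition vneg :: "int \<Rightarrow> (nat \<Rightarrow> int) \<Rightarrow> (nat \<Rightarrow> int)" where
  "vneg m u = (\<lambda>j. (- u j) mod m)"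

definition mixed_space :: "int \<Rightarrow> nat \<Rightarrow> nat \<Rightarrow> ((nat \<Rightarrow> int) \<times> (nat \<Rightarrow> int)) set" where
  "mixed_space p \<alpha> \<beta> = vec_space p \<alpha> \<times> vec_space (p^2) \<beta>"

definition madd :: "int \<Rightarrow> ((nat \<Rightarrow> int) \<times> (nat \<Rightarrow> int)) \<Rightarrow> ((nat \<Rightarrow> int) \<times> (nat \<Rightarrow> int))
                     \<Rightarrow> ((nat \<Rightarrow> int) \<times> (nat \<Rightarrow> int))" where
  "madd p a b = (vadd p (fst a) (fst b), vadd (p^2) (snd a) (snd b))"

definition mneg :: "int \<Rightarrow> ((nat \<Rightarrow> int) \<times> (nat \<Rightarrow> int)) \<Rightarrow> ((nat \<Rightarrow> int) \<times> (nat \<Rightarrow> int))" where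
  "mneg p a = (vneg p (fst a), vneg (p^2) (snd a))"

definition additive_code :: "int \<Rightarrow> nat \<Rightarrow> nat \<Rightarrow> ((nat \<Rightarrow> int) \<times> (nat \<Rightarrow> int)) set \<Rightarrow> bool" where
  "additive_code p \<alpha> \<beta> C \<longleftrightarrow> C \<subseteq> mixed_space p \<alpha> \<beta> \<and> (\<lambda>_. 0, \<lambda>_. 0) \<in> C \<and>
     (\<forall>a\<in>C. \<forall>b\<in>C. madd p a b \<in> C) \<and> (\<forall>a\<in>C. mneg p a \<in> C)"

definition msum :: "int \<Rightarrow> (nat \<Rightarrow> (nat \<Rightarrow> int) \<times> (nat \<Rightarrow> int)) \<Rightarrow> nat \<Rightarrow> ((nat \<Rightarrow> int) \<times> (nat \<Rightarrow> int))" where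
  "msum p x n = ((\<lambda>j. (\<Sum>i=1..n. fst (x i) j) mod p), (\<lambda>j. (\<Sum>i=1..n. snd (x i) j) mod (p^2)))"

definition vsum :: "int \<Rightarrow> (nat \<Rightarrow> nat \<Rightarrow> int) \<Rightarrow> nat \<Rightarrow> (nat \<Rightarrow> int)" where
  "vsum p v n = (\<lambda>j. (\<Sum>i=1..n. v i j) mod p)"

(* Gray map phi : Z_{p^2} -> Z_p^p, theta = theta'' p + theta',
   phi(theta) = theta''(1,...,1) + theta'(0,1,...,p-1); k-th coordinate, 0 <= k < p *)
definition gray :: "int \<Rightarrow> int \<Rightarrow> nat \<Rightarrow> int" where
  "gray p \<theta> k = ((\<theta> div p) + (\<theta> mod p) * int k) mod p"

(* Phi(x,y) = (x, phi(y_1), ..., phi(y_beta)) in Z_p^(alpha + p beta) *)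
definition Gray_map :: "int \<Rightarrow> nat \<Rightarrow> nat \<Rightarrow> ((nat \<Rightarrow> int) \<times> (nat \<Rightarrow> int)) \<Rightarrow> (nat \<Rightarrow> int)" where
  "Gray_map p \<alpha> \<beta> c = (\<lambda>j. if j < \<alpha> then fst c j
      else if j < \<alpha> + nat p * \<beta> then gray p (snd c ((j - \<alpha>) div nat p)) ((j - \<alpha>) mod nat p)
      else 0)"

definition kernel :: "int \<Rightarrow> nat \<Rightarrow> (nat \<Rightarrow> int) set \<Rightarrow> (nat \<Rightarrow> int) set" where
  "kernel p N C = {v \<in> vec_space p N. (\<lambda>c. vadd p c v) ` C = C}"

end

theory Submission
  imports Defs
begin
lemma gray_mod: assumes "(p::int) > 0" shows "gray p (x mod p^2) k = (x div p + (x mod p) * int k) mod p"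
proof -
  have e: "x mod p^2 = p*(x div p mod p) + x mod p"
    using zmod_zmult2_eq[of p x p] assms by (simp add: power2_eq_square)
  have a: "(x mod p^2) div p = (x div p) mod p"
    unfolding e using assms by simp
  have b: "(x mod p^2) mod p = x mod p"
    unfolding e by simp
  show ?thesis unfolding gray_def a b by (simp add: mod_add_left_eq)
qed

lemma carry:
  fixes p :: int and y :: "nat \<Rightarrow> int"
  assumes p: "p > 0"
  shows "(gray p ((\<Sum>i\<in>I. y i) mod p^2) k - (\<Sum>i\<in>I. gray p (y i) k) mod p) mod p
         = ((\<Sum>i\<in>I. y i mod p) div p) mod p"
proof -
  define A where "A = (\<Sum>i\<in>I. y i div p)"
  define B where "B = (\<Sum>i\<in>I. y i mod p)"
  define S where "S = (\<Sum>i\<in>I. y i)"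
  have SAB: "S = p * A + B"
    unfolding S_def A_def B_def sum_distrib_left sum.distrib[symmetric]
    by (simp add: div_mult_mod_eq)
  have s: "(\<Sum>i\<in>I. gray p (y i) k) mod p = (A + B * int k) mod p"
  proof -
    have "(\<Sum>i\<in>I. gray p (y i) k) mod p = (\<Sum>i\<in>I. (y i div p + y i mod p * int k)) mod p"
      unfolding gray_def by (simp add: mod_sum_eq)
    also have "\<dots> = (A + B * int k) mod p"
      unfolding A_def B_def by (simp add: sum.distrib sum_distrib_right)
    finally show ?thesis .
  qed
  have w: "gray p (S mod p^2) k = (S div p + S mod p * int k) mod p"
    using gray_mod[OF p] .
  have d: "S div p = A + B div p" using SAB p by simp
  have m: "S mod p = B mod p" using SAB by simp
  have "(gray p (S mod p^2) k - (\<Sum>i\<in>I. gray p (y i) k) mod p) mod p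
      = ((S div p + S mod p * int k) - (A + B * int k)) mod p"
    unfolding w s by (simp add: mod_diff_eq)
  also have "(S div p + S mod p * int k) - (A + B * int k) = B div p + p * (- (B div p) * int k)"
  proof -
    obtain q r where qr: "q = B div p" "r = B mod p" by simp
    have h: "B = p*q + r" using qr by simp
    show ?thesis unfolding d m qr[symmetric] unfolding h by (simp add: algebra_simps)
  qed
  also have "(B div p + p * (- (B div p) * int k)) mod p = (B div p) mod p"
    by (rule mod_mult_self2)
  finally show ?thesis unfolding S_def B_def .
qed

lemma msum_Suc: "msum p x (Suc n) = madd p (msum p x n) (x (Suc n))"
  unfolding msum_def madd_def vadd_def
  by (simp add: mod_add_left_eq)

lemma msum_in:
  assumes "additive_code p \<alpha> \<beta> C" "\<forall>i\<in>{1..n}. x i \<in> C"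
  shows "msum p x n \<in> C"
  using assms(2)
proof (induction n)
  case 0
  then show ?case using assms(1) unfolding additive_code_def msum_def by simp
next
  case (Suc n)
  then show ?case using assms(1) unfolding additive_code_def msum_Suc by simp
qed

lemma vec_range: "v \<in> vec_space m n \<Longrightarrow> m > 0 \<Longrightarrow> 0 \<le> v j \<and> v j < m"
  unfolding vec_space_def by (cases "j < n") auto

lemma Phi_vec:
  assumes p: "p > 0" and c: "c \<in> mixed_space p \<alpha> \<beta>"
  shows "Gray_map p \<alpha> \<beta> c \<in> vec_space p (\<alpha> + nat p * \<beta>)"
  using c p unfolding mixed_space_def vec_space_def Gray_map_def gray_def
  by auto

lemma vadd_assoc: "vadd p c (vadd p e s) = vadd p (vadd p c e) s"
  unfolding vadd_def by (simp add: mod_add_left_eq mod_add_right_eq add.assoc)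

lemma transl:
  assumes C: "additive_code p \<alpha> \<beta> C" and u: "u \<in> C" and p: "p > 0"
  shows "(\<lambda>v. madd p v u) ` C = C"
proof
  show "(\<lambda>v. madd p v u) ` C \<subseteq> C" using C u unfolding additive_code_def by auto
next
  show "C \<subseteq> (\<lambda>v. madd p v u) ` C"
  proof
    fix v assume v: "v \<in> C"
    have vm: "v \<in> mixed_space p \<alpha> \<beta>" using C v unfolding additive_code_def by auto
    have p2: "p^2 > 0" using p by simp
    have id: "((a + (-b) mod m) mod m + b) mod m = a" if "0 \<le> a" "a < m" for a b m :: int
    proof -
      have "((a + (-b) mod m) mod m + b) mod m = (a + (-b) + b) mod m"
        by (simp add: mod_add_left_eq mod_add_right_eq)
      then show ?thesis using that by simp
    qed
    have "madd p (madd p v (mneg p u)) u = v"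
      unfolding madd_def mneg_def vadd_def vneg_def
      using vec_range[of "fst v" p \<alpha>, OF _ p] vec_range[of "snd v" "p^2" \<beta>, OF _ p2] vm
      by (auto simp: mixed_space_def id intro!: prod_eqI)
    moreover have "madd p v (mneg p u) \<in> C" using C u v unfolding additive_code_def by auto
    ultimately show "v \<in> (\<lambda>v. madd p v u) ` C" by (metis image_eqI)
  qed
qed

lemma Phi_add:
  assumes p: "p > 0" and v: "v \<in> mixed_space p \<alpha> \<beta>"
    and u1: "\<forall>j. fst u j = 0" and u2: "\<forall>b<\<beta>. snd u b mod p = 0"
  shows "Gray_map p \<alpha> \<beta> (madd p v u) = vadd p (Gray_map p \<alpha> \<beta> v) (Gray_map p \<alpha> \<beta> u)"
proof
  fix j
  define P where "P = nat p"
  have Pp: "int P = p" using p unfolding P_def by simp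
  show "Gray_map p \<alpha> \<beta> (madd p v u) j = vadd p (Gray_map p \<alpha> \<beta> v) (Gray_map p \<alpha> \<beta> u) j"
  proof (cases "j < \<alpha>")
    case True
    then show ?thesis using vec_range[of "fst v" p \<alpha> j, OF _ p] v u1
      unfolding Gray_map_def madd_def vadd_def mixed_space_def by auto
  next
    case F: False
    show ?thesis
    proof (cases "j < \<alpha> + P * \<beta>")
      case True
      define b where "b = (j - \<alpha>) div P"
      define k where "k = (j - \<alpha>) mod P"
      have "j - \<alpha> < \<beta> * P" using True F by (simp add: mult.commute)
      then have b\<beta>: "b < \<beta>" unfolding b_def by (simp add: less_mult_imp_div_less)
      define vb where "vb = snd v b"
      define th where "th = snd u b"
      have th: "th = p * (th div p)" using u2 b\<beta> unfolding th_def
        by (metis add.right_neutral div_mult_mod_eq mult.commute)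
      have L: "Gray_map p \<alpha> \<beta> (madd p v u) j = gray p ((vb + th) mod p^2) k"
        using True F unfolding Gray_map_def madd_def vadd_def b_def k_def vb_def th_def P_def by simp
      have R: "vadd p (Gray_map p \<alpha> \<beta> v) (Gray_map p \<alpha> \<beta> u) j = (gray p vb k + gray p th k) mod p"
        using True F unfolding Gray_map_def madd_def vadd_def b_def k_def vb_def th_def P_def by simp
      have e1: "(vb + th) div p = vb div p + th div p"
        using p by (subst th) simp
      have e2: "(vb + th) mod p = vb mod p"
        by (subst th) simp
      have e3: "th mod p = 0" by (subst th) simp
      show ?thesis unfolding L R gray_mod[OF p] e1 e2 unfolding gray_def e3
        using mod_add_right_eq[of "vb div p + int k * (vb mod p)" "th div p" p]
        by (simp add: mod_add_left_eq mod_add_right_eq algebra_simps)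
    next
      case False
      then show ?thesis using F unfolding Gray_map_def vadd_def P_def by simp
    qed
  qed
qed

theorem lemma10:
  fixes p :: int and \<alpha> \<beta> n :: nat
    and \<C> :: "((nat \<Rightarrow> int) \<times> (nat \<Rightarrow> int)) set"
    and x :: "nat \<Rightarrow> (nat \<Rightarrow> int) \<times> (nat \<Rightarrow> int)"
  assumes "prime p" and "p > 2"
    and "additive_code p \<alpha> \<beta> \<C>"
    and "\<forall>i\<in>{1..n}. x i \<in> \<C>"
    and "vsum p (\<lambda>i. Gray_map p \<alpha> \<beta> (x i)) n
           \<in> kernel p (\<alpha> + nat p * \<beta>) (Gray_map p \<alpha> \<beta> ` \<C>)"
  shows "Gray_map p \<alpha> \<beta> (msum p x n) \<in> kernel p (\<alpha> + nat p * \<beta>) (Gray_map p \<alpha> \<beta> ` \<C>)"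
proof -
  have p: "p > 0" using assms(2) by simp
  define P where "P = nat p"
  have Pp: "int P = p" using p unfolding P_def by simp
  have P2: "P > 1" using assms(2) unfolding P_def by simp
  define \<Phi> where "\<Phi> = Gray_map p \<alpha> \<beta>"
  define N where "N = \<alpha> + P * \<beta>"
  have CM: "\<C> \<subseteq> mixed_space p \<alpha> \<beta>" using assms(3) unfolding additive_code_def by auto
  define z where "z = msum p x n"
  have zC: "z \<in> \<C>" unfolding z_def using msum_in[OF assms(3,4)] .
  define s where "s = vsum p (\<lambda>i. \<Phi> (x i)) n"
  have sK: "(\<lambda>c. vadd p c s) ` (\<Phi> ` \<C>) = \<Phi> ` \<C>"
    using assms(5) unfolding kernel_def s_def \<Phi>_def by auto
  have "\<Phi> z \<in> (\<lambda>c. vadd p c s) ` (\<Phi> ` \<C>)" using zC sK by auto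
  then obtain u where uC: "u \<in> \<C>" and zu: "\<Phi> z = vadd p (\<Phi> u) s" by auto
  define e where "e = \<Phi> u"
  have eV: "e \<in> vec_space p N" unfolding e_def \<Phi>_def N_def P_def using Phi_vec[OF p, of u] uC CM by blast
  have key: "e j = (\<Phi> z j - s j) mod p" for j
  proof -
    have "(\<Phi> z j - s j) mod p = ((e j + s j) mod p - s j) mod p" unfolding zu e_def vadd_def by simp
    also have "\<dots> = e j mod p" by (simp add: mod_diff_left_eq)
    also have "\<dots> = e j" using vec_range[OF eV p, of j] by simp
    finally show ?thesis by simp
  qed
  have u1: "\<forall>j. fst u j = 0"
  proof
    fix j
    show "fst u j = 0"
    proof (cases "j < \<alpha>")
      case True
      have "e j = fst u j" using True unfolding e_def \<Phi>_def Gray_map_def by simp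
      moreover have "\<Phi> z j = s j" using True
        unfolding \<Phi>_def Gray_map_def z_def msum_def s_def vsum_def by simp
      ultimately show ?thesis using key[of j] by simp
    next
      case False
      then show ?thesis using uC CM unfolding mixed_space_def vec_space_def by auto
    qed
  qed
  have blk: "e (\<alpha> + P * b + k) = (((\<Sum>i=1..n. snd (x i) b mod p)) div p) mod p"
    if b: "b < \<beta>" and k: "k < P" for b k
  proof -
    define j where "j = \<alpha> + P * b + k"
    have jN: "j < \<alpha> + P * \<beta>"
    proof -
      have "P * b + k < P * b + P" using k by simp
      also have "\<dots> = P * (b + 1)" by simp
      also have "\<dots> \<le> P * \<beta>" using b by (intro mult_le_mono2) simp
      finally show ?thesis unfolding j_def by simp
    qed
    have d: "(j - \<alpha>) div P = b" and m: "(j - \<alpha>) mod P = k"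
      using k unfolding j_def by auto
    have jA: "\<not> j < \<alpha>" unfolding j_def by simp
    have "\<Phi> z j = gray p ((\<Sum>i=1..n. snd (x i) b) mod p^2) k"
      using jA jN d m unfolding \<Phi>_def Gray_map_def z_def msum_def P_def by simp
    moreover have "s j = (\<Sum>i=1..n. gray p (snd (x i) b) k) mod p"
      using jA jN d m unfolding \<Phi>_def Gray_map_def s_def vsum_def P_def by simp
    ultimately show ?thesis using key[of j] carry[OF p] unfolding j_def by simp
  qed
  have u2: "\<forall>b<\<beta>. snd u b mod p = 0"
  proof (intro allI impI)
    fix b assume b: "b < \<beta>"
    define th where "th = snd u b"
    have "e (\<alpha> + P * b + 0) = e (\<alpha> + P * b + 1)" using blk[OF b, of 0] blk[OF b, of 1] P2 by simp
    moreover have "e (\<alpha> + P * b + k) = gray p th k" if "k < P" for k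
    proof -
      have jN: "\<alpha> + P * b + k < \<alpha> + P * \<beta>"
      proof -
        have "P * b + k < P * b + P" using that by simp
        also have "\<dots> = P * (b + 1)" by simp
        also have "\<dots> \<le> P * \<beta>" using b by (intro mult_le_mono2) simp
        finally show ?thesis by simp
      qed
      have d: "(\<alpha> + P * b + k - \<alpha>) div P = b" and m: "(\<alpha> + P * b + k - \<alpha>) mod P = k"
        using that by auto
      show ?thesis using jN d m unfolding e_def \<Phi>_def Gray_map_def th_def P_def by simp
    qed
    ultimately have "gray p th 0 = gray p th 1" using P2 by (metis One_nat_def zero_less_one less_trans)
    then have g: "(th div p) mod p = (th div p + th mod p) mod p" unfolding gray_def by simp
    have "th mod p = (th mod p) mod p" by simp
    also have "\<dots> = ((th div p + th mod p) - th div p) mod p" by simp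
    also have "\<dots> = ((th div p + th mod p) mod p - (th div p) mod p) mod p" by (simp add: mod_diff_eq)
    also have "\<dots> = 0" using g by simp
    finally show "snd u b mod p = 0" unfolding th_def .
  qed
  have add: "\<Phi> (madd p v u) = vadd p (\<Phi> v) e" if "v \<in> \<C>" for v
    unfolding \<Phi>_def e_def using Phi_add[OF p _ u1 u2, of v \<alpha>] that CM by blast
  have eK: "(\<lambda>c. vadd p c e) ` (\<Phi> ` \<C>) = \<Phi> ` \<C>"
  proof -
    have "(\<lambda>c. vadd p c e) ` (\<Phi> ` \<C>) = \<Phi> ` ((\<lambda>v. madd p v u) ` \<C>)"
      unfolding image_image using add by (auto intro: image_cong)
    also have "\<dots> = \<Phi> ` \<C>" using transl[OF assms(3) uC p] by simp
    finally show ?thesis .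
  qed
  have "(\<lambda>c. vadd p c (\<Phi> z)) ` (\<Phi> ` \<C>) = (\<lambda>c. vadd p c s) ` ((\<lambda>c. vadd p c e) ` (\<Phi> ` \<C>))"
    unfolding zu e_def image_image vadd_assoc by simp
  also have "\<dots> = \<Phi> ` \<C>" unfolding eK sK ..
  finally have K: "(\<lambda>c. vadd p c (\<Phi> z)) ` (\<Phi> ` \<C>) = \<Phi> ` \<C>" .
  have zV: "\<Phi> z \<in> vec_space p (\<alpha> + nat p * \<beta>)" unfolding \<Phi>_def using Phi_vec[OF p, of z] zC CM by blast
  show ?thesis using K zV unfolding kernel_def z_def \<Phi>_def by simp
qed

end
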